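(* Let $\widetilde{\mathcal R}\subseteq\mathcal R$ be finite and let $\mathcal R_1,\mathcal R_2$ be produced from $\widetilde{\mathcal R}$ by the selection procedure. Then: (i) $\mathcal R_1\sqcup\mathcal R_2=\widetilde{\mathcal R}$ and $\big|\bigcup_{R\in\mathcal R_2}R\big|\le 25\sum_{R\in\mathcal R_1}|R|$; (ii) whenever $R,R'\in\mathcal R_1$ are distinct, $R\cap R'\neq\emptyset$ and $L(R)\le L(R')$, we have $\mathrm{slope}(R)\not\supseteq\mathrm{slope}(R')$.
   Context: Dyadic model. Fix $0<\delta\le1$ and $w=2^{-m}$ for an integer $m\ge1$. All dyadic intervals are half-open, $[j2^{-k},(j+1)2^{-k})$. For $k\ge0$, $S_k$ is the set of dyadic subintervals of $[0,1)$ of length $2^{-k}$ (slopes); $c_s$ is the center of $s$. Let $u:[0,1)\to S_m$ be measurable. Let $\mathcal D$ be the dyadic intervals $I\subseteq[0,1)$ with $|I|\ge w$, $k(I)=\log_2(|I|/w)$, $\mathrm{Pop}_I(s)=\frac1{|I|}|\{x\in I:u(x)\subseteq s\}|$, $S(I)=\{s\in S_{k(I)}:\mathrm{Pop}_I(s)\ge\delta\}$. The parallelogram $P(I,s,b)=\{(x,y):x\in I,\ b\le y-c_sx<b+w\}$ ($I\in\mathcal D$, $s\in S_{k(I)}$, $b\in\mathbb R$) has $\mathrm{int}(P)=I$, $\mathrm{slope}(P)=s$, $L(P)=|I|$; $\mathcal R$ is the collection of these with $s\in S(I)$. For such $R$ with center $(x_0,y_0)$, $5R=\{(x,y):|x-x_0|\le\tfrac52|I|,\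 |y-y_0-c_s(x-x_0)|\le\tfrac52 w\}$. Selection procedure: start with $\mathcal R_1=\mathcal R_2=\emptyset$; while $\widetilde{\mathcal R}\ne\emptyset$, choose $R\in\widetilde{\mathcal R}$ of maximal length $L(R)$, move it from $\widetilde{\mathcal R}$ to $\mathcal R_1$, and then move to $\mathcal R_2$ every $R'\in\widetilde{\mathcal R}$ with $R'\subseteq\bigcup_{R''\in\mathcal R_1}5R''$. *)

theory Defs
  imports "HOL-Analysis.Analysis"
begin

text \<open>Dyadic intervals are encoded as pairs (k, j), standing for [j 2^-k, (j+1) 2^-k).\<close>

type_synonym dyad = "nat \<times> nat"

definition dyint :: "dyad \<Rightarrow> real set" where
  "dyint d = {real (snd d) / 2 ^ fst d ..< (real (snd d) + 1) / 2 ^ fst d}"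

definition dlen :: "dyad \<Rightarrow> real" where
  "dlen d = 1 / 2 ^ fst d"

definition dcen :: "dyad \<Rightarrow> real" where
  "dcen d = (real (snd d) + 1/2) / 2 ^ fst d"

definition Sk :: "nat \<Rightarrow> dyad set" where
  "Sk k = {(k, j) | j. j < 2 ^ k}"

definition wid :: "nat \<Rightarrow> real" where
  "wid m = 1 / 2 ^ m"

definition Dcal :: "nat \<Rightarrow> dyad set" where
  "Dcal m = {(k, j) | k j. k \<le> m \<and> j < 2 ^ k}"

text \<open>k(I) = log2(|I|/w).\<close>
definition kI :: "nat \<Rightarrow> dyad \<Rightarrow> nat" where
  "kI m I = m - fst I"

definition Pop :: "(real \<Rightarrow> dyad) \<Rightarrow> dyad \<Rightarrow> dyad \<Rightarrow> real" where
  "Pop u I s = measure lebesgue {x \<in> dyint I. dyint (u x) \<subseteq> dyint s} / dlen I"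

definition SI :: "real \<Rightarrow> nat \<Rightarrow> (real \<Rightarrow> dyad) \<Rightarrow> dyad \<Rightarrow> dyad set" where
  "SI \<delta> m u I = {s \<in> Sk (kI m I). Pop u I s \<ge> \<delta>}"

text \<open>A parallelogram P(I,s,b) is encoded by the triple (I, s, b).\<close>
type_synonym para = "dyad \<times> dyad \<times> real"

definition pint :: "para \<Rightarrow> dyad" where "pint R = fst R"
definition pslope :: "para \<Rightarrow> dyad" where "pslope R = fst (snd R)"
definition poff :: "para \<Rightarrow> real" where "poff R = snd (snd R)"
definition pL :: "para \<Rightarrow> real" where "pL R = dlen (pint R)"

definition pset :: "nat \<Rightarrow> para \<Rightarrow> (real \<times> real) set" where
  "pset m R = {(x, y). x \<in> dyint (pint R) \<and>
       poff R \<le> y - dcen (pslope R) * x \<and> y - dcen (pslope R) * x < poff R + wid m}"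

definition Rcal :: "real \<Rightarrow> nat \<Rightarrow> (real \<Rightarrow> dyad) \<Rightarrow> para set" where
  "Rcal \<delta> m u = {R. pint R \<in> Dcal m \<and> pslope R \<in> SI \<delta> m u (pint R)}"

definition five :: "nat \<Rightarrow> para \<Rightarrow> (real \<times> real) set" where
  "five m R = (let x0 = dcen (pint R);
                   c = dcen (pslope R);
                   y0 = poff R + wid m / 2 + c * x0
               in {(x, y). \<bar>x - x0\<bar> \<le> 5/2 * dlen (pint R) \<and>
                           \<bar>y - y0 - c * (x - x0)\<bar> \<le> 5/2 * wid m})"

text \<open>One iteration of the selection procedure, on states (Rtilde, R1, R2).\<close>
definition sel_step :: "nat \<Rightarrow> para set \<times> para set \<times> para set \<Rightarrow>
                         para set \<times> para set \<times> para set \<Rightarrow> bool" where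
  "sel_step m st st' \<longleftrightarrow>
     (let T = fst st; A = fst (snd st); B = snd (snd st) in
      \<exists>R\<in>T. (\<forall>R'\<in>T. pL R' \<le> pL R) \<and>
        (let A' = insert R A;
             moved = {R' \<in> T - {R}. pset m R' \<subseteq> (\<Union>R''\<in>A'. five m R'')}
         in st' = (T - {R} - moved, A', B \<union> moved)))"

definition selection :: "nat \<Rightarrow> para set \<Rightarrow> para set \<Rightarrow> para set \<Rightarrow> bool" where
  "selection m Rt R1 R2 \<longleftrightarrow> (sel_step m)\<^sup>*\<^sup>* (Rt, {}, {}) ({}, R1, R2)"

end

theory Submission
  imports Defs
begin

definition PS :: "real set \<Rightarrow> real set \<Rightarrow> real \<Rightarrow> (real \<times> real) set" where
  "PS X Y k = {p. fst p \<in> X \<and> snd p - k * fst p \<in> Y}"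

lemma PS_sets:
  assumes "X \<in> sets borel" "Y \<in> sets borel"
  shows "PS X Y k \<in> sets (lborel \<Otimes>\<^sub>M lborel)"
proof -
  have "PS X Y k = (\<lambda>p. fst p) -` X \<inter> (\<lambda>p. snd p - k * fst p) -` Y" by (auto simp: PS_def)
  moreover have m1: "(\<lambda>p::real\<times>real. fst p) \<in> borel_measurable (lborel \<Otimes>\<^sub>M lborel)" by measurable
  moreover have m2: "(\<lambda>p::real\<times>real. snd p - k * fst p) \<in> borel_measurable (lborel \<Otimes>\<^sub>M lborel)" by measurable
  ultimately show ?thesis
    using sets.Int[OF measurable_sets[OF m1 assms(1)] measurable_sets[OF m2 assms(2)]]
    by (simp add: space_pair_measure)
qed

lemma PS_emeasure:
  assumes "X \<in> sets borel" "Y \<in> sets borel"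
    and "\<And>t. emeasure lborel {y. y - t \<in> Y} = ennreal c"
  shows "emeasure lborel (PS X Y k) = emeasure lborel X * ennreal c"
proof -
  have "emeasure (lborel :: (real\<times>real) measure) (PS X Y k) = emeasure (lborel \<Otimes>\<^sub>M lborel) (PS X Y k)"
    by (simp add: lborel_prod)
  also have "\<dots> = (\<integral>\<^sup>+x. emeasure lborel (Pair x -` PS X Y k) \<partial>lborel)"
    by (rule sigma_finite_measure.emeasure_pair_measure_alt[OF sigma_finite_lborel PS_sets[OF assms(1,2)]])
  also have "\<dots> = (\<integral>\<^sup>+x. ennreal c * indicator X x \<partial>lborel)"
  proof (rule nn_integral_cong)
    fix x :: real
    show "emeasure lborel (Pair x -` PS X Y k) = ennreal c * indicator X x"
    proof (cases "x \<in> X")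
      case True
      then have "Pair x -` PS X Y k = {y. y - k * x \<in> Y}" by (auto simp: PS_def)
      then show ?thesis using True assms(3) by simp
    next
      case False
      then have "Pair x -` PS X Y k = {}" by (auto simp: PS_def)
      then show ?thesis using False by simp
    qed
  qed
  also have "\<dots> = ennreal c * emeasure lborel X"
    using assms(1) by (simp add: nn_integral_cmult_indicator)
  finally show ?thesis by (simp add: mult.commute)
qed

lemma trans_Ico: "l \<le> u \<Longrightarrow> emeasure lborel {y::real. y - t \<in> {l..<u}} = ennreal (u - l)"
proof -
  assume "l \<le> u"
  have "{y::real. y - t \<in> {l..<u}} = {l+t..<u+t}" by auto
  then show ?thesis using \<open>l \<le> u\<close> by simp
qed

lemma trans_Icc: "l \<le> u \<Longrightarrow> emeasure lborel {y::real. y - t \<in> {l..u}} = ennreal (u - l)"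
proof -
  assume "l \<le> u"
  have "{y::real. y - t \<in> {l..u}} = {l+t..u+t}" by auto
  then show ?thesis using \<open>l \<le> u\<close> by simp
qed


lemma trans_Ico': "u - l = c \<Longrightarrow> l \<le> u \<Longrightarrow> emeasure lborel {y::real. y - t \<in> {l..<u}} = ennreal c"
  using trans_Ico by blast

lemma trans_Icc': "u - l = c \<Longrightarrow> l \<le> u \<Longrightarrow> emeasure lborel {y::real. y - t \<in> {l..u}} = ennreal c"
  using trans_Icc by blast

lemma dyint_Ico: "dyint d = {real (snd d) / 2 ^ fst d ..< real (snd d) / 2 ^ fst d + dlen d}"
  by (simp add: dyint_def dlen_def add_divide_distrib)

lemma dlen_pos: "dlen d > 0" by (simp add: dlen_def)

lemma dcen_eq: "dcen d = real (snd d) / 2 ^ fst d + dlen d / 2"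
  by (simp add: dcen_def dlen_def add_divide_distrib)

lemma dcen_in: "dcen d \<in> dyint d"
  using dlen_pos[of d] by (simp add: dyint_Ico dcen_eq)

lemma in_dyint_cen:
  assumes "x \<in> dyint d" shows "\<bar>x - dcen d\<bar> \<le> dlen d / 2"
proof -
  have "real (snd d) / 2 ^ fst d \<le> x" "x < real (snd d) / 2 ^ fst d + dlen d"
    using assms by (simp_all add: dyint_Ico)
  then show ?thesis unfolding dcen_eq abs_le_iff by linarith
qed

lemma in_dyint_two: "x \<in> dyint d \<Longrightarrow> p \<in> dyint d \<Longrightarrow> \<bar>x - p\<bar> \<le> dlen d"
  by (simp add: dyint_Ico abs_le_iff)

lemma cen_sub: "dyint s \<subseteq> dyint s' \<Longrightarrow> \<bar>dcen s - dcen s'\<bar> \<le> dlen s' / 2"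
  using dcen_in[of s] in_dyint_cen[of "dcen s" s'] by auto

lemma len_prod:
  assumes "R \<in> Rcal \<delta> m u"
  shows "dlen (pslope R) * dlen (pint R) = wid m"
proof -
  have k: "fst (pint R) \<le> m" using assms by (auto simp: Rcal_def Dcal_def)
  have s: "fst (pslope R) = m - fst (pint R)" using assms by (auto simp: Rcal_def SI_def Sk_def kI_def)
  have "(2::real) ^ fst (pslope R) * 2 ^ fst (pint R) = 2 ^ m"
    using k s by (simp add: power_add[symmetric])
  then show ?thesis by (simp add: dlen_def wid_def)
qed

lemma geo:
  assumes "(p,q) \<in> pset m P" "(p,q) \<in> pset m Q"
    and "dlen (pint P) \<le> 2 * dlen (pint Q)"
    and "\<bar>dcen (pslope P) - dcen (pslope Q)\<bar> * dlen (pint P) \<le> wid m"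
  shows "pset m P \<subseteq> five m Q"
proof
  fix z assume z: "z \<in> pset m P"
  obtain x y where xy: "z = (x,y)" by (cases z)
  define c where "c = dcen (pslope Q)"
  define c' where "c' = dcen (pslope P)"
  define w where "w = wid m"
  define b where "b = poff Q"
  define b' where "b' = poff P"
  define x0 where "x0 = dcen (pint Q)"
  have hx: "x \<in> dyint (pint P)" and hy: "b' \<le> y - c' * x" "y - c' * x < b' + w"
    using z xy by (auto simp: pset_def c'_def b'_def w_def)
  have hp: "p \<in> dyint (pint P)" and hq: "b' \<le> q - c' * p" "q - c' * p < b' + w"
    using assms(1) by (auto simp: pset_def c'_def b'_def w_def)
  have hp2: "p \<in> dyint (pint Q)" and hq2: "b \<le> q - c * p" "q - c * p < b + w"
    using assms(2) by (auto simp: pset_def c_def b_def w_def)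
  have d1: "\<bar>x - p\<bar> \<le> dlen (pint P)" using in_dyint_two[OF hx hp] .
  have d2: "\<bar>p - x0\<bar> \<le> dlen (pint Q) / 2" using in_dyint_cen[OF hp2] by (simp add: x0_def)
  have X: "\<bar>x - x0\<bar> \<le> 5/2 * dlen (pint Q)" using d1 d2 assms(3) by linarith
  have "\<bar>(c' - c) * (x - p)\<bar> \<le> \<bar>c' - c\<bar> * dlen (pint P)"
    unfolding abs_mult by (rule mult_left_mono[OF d1]) simp
  then have e: "\<bar>(c' - c) * (x - p)\<bar> \<le> w" using assms(4) by (simp add: c_def c'_def w_def)
  define t where "t = (c' - c) * (x - p)"
  define Z where "Z = y - (b + w/2 + c * x0) - c * (x - x0)"
  define A1 where "A1 = y - c'*x"
  define A2 where "A2 = q - c'*p"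
  define A3 where "A3 = q - c*p"
  have eq: "Z = A1 - A2 + t + (A3 - b - w/2)"
    by (simp add: algebra_simps Z_def A1_def A2_def A3_def t_def)
  have e': "-w \<le> t \<and> t \<le> w" using e unfolding t_def abs_le_iff by linarith
  have "-(5/2*w) \<le> Z \<and> Z \<le> 5/2*w"
    using eq e' hy hq hq2 unfolding A1_def[symmetric] A2_def[symmetric] A3_def[symmetric] by linarith
  then have Y: "\<bar>y - (b + w/2 + c * x0) - c * (x - x0)\<bar> \<le> 5/2 * w"
    unfolding Z_def abs_le_iff by linarith
  show "z \<in> five m Q"
    using X Y xy by (simp add: five_def Let_def c_def w_def b_def x0_def)
qed

lemma keyK:
  assumes "R \<in> Rcal \<delta> m u" "Q \<in> Rcal \<delta> m u" "pset m R \<inter> pset m Q \<noteq> {}" "pL R \<le> pL Q"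
    and "dyint (pslope Q) \<subseteq> dyint (pslope R) \<or> dyint (pslope R) \<subseteq> dyint (pslope Q)"
  shows "pset m R \<subseteq> five m Q"
proof -
  obtain p q where pq: "(p,q) \<in> pset m R" "(p,q) \<in> pset m Q" using assms(3) by auto
  have L: "dlen (pint R) \<le> dlen (pint Q)" using assms(4) by (simp add: pL_def)
  have posR: "dlen (pint R) > 0" by (rule dlen_pos)
  have w: "wid m > 0" by (simp add: wid_def)
  have "\<bar>dcen (pslope R) - dcen (pslope Q)\<bar> * dlen (pint R) \<le> wid m / 2"
    using assms(5)
  proof
    assume "dyint (pslope Q) \<subseteq> dyint (pslope R)"
    then have "\<bar>dcen (pslope Q) - dcen (pslope R)\<bar> \<le> dlen (pslope R) / 2" by (rule cen_sub)
    then have "\<bar>dcen (pslope R) - dcen (pslope Q)\<bar> * dlen (pint R) \<le> dlen (pslope R) / 2 * dlen (pint R)"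
      using posR by (simp add: abs_minus_commute)
    also have "\<dots> = wid m / 2" using len_prod[OF assms(1)] by simp
    finally show ?thesis .
  next
    assume "dyint (pslope R) \<subseteq> dyint (pslope Q)"
    then have a: "\<bar>dcen (pslope R) - dcen (pslope Q)\<bar> \<le> dlen (pslope Q) / 2" by (rule cen_sub)
    have "\<bar>dcen (pslope R) - dcen (pslope Q)\<bar> * dlen (pint R) \<le> dlen (pslope Q) / 2 * dlen (pint Q)"
      by (rule mult_mono[OF a L]) (auto simp: less_imp_le[OF dlen_pos])
    also have "\<dots> = wid m / 2" using len_prod[OF assms(2)] by simp
    finally show ?thesis .
  qed
  then show ?thesis
    using geo[OF pq] L posR w by auto
qed


lemma PS_sets': "X \<in> sets borel \<Longrightarrow> Y \<in> sets borel \<Longrightarrow> PS X Y k \<in> sets (lborel :: (real\<times>real) measure)"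
  using PS_sets[of X Y k] lborel_prod[where 'a=real and 'b=real] by metis

lemma pset_PS: "pset m R = PS (dyint (pint R)) {poff R ..< poff R + wid m} (dcen (pslope R))"
  by (auto simp: pset_def PS_def)

lemma five_PS: "five m R = PS {dcen (pint R) - 5/2 * dlen (pint R) .. dcen (pint R) + 5/2 * dlen (pint R)}
   {poff R + wid m/2 - 5/2*wid m .. poff R + wid m/2 + 5/2*wid m} (dcen (pslope R))"
  unfolding five_def PS_def Let_def abs_le_iff by (auto simp: algebra_simps)

lemma wid_pos: "wid m > 0" by (simp add: wid_def)

lemma pset_emeasure: "emeasure lborel (pset m R) = ennreal (dlen (pint R) * wid m)"
proof -
  have "emeasure lborel (pset m R) = emeasure lborel (dyint (pint R)) * ennreal (wid m)"
    unfolding pset_PS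
    apply (rule PS_emeasure)
      apply (simp add: dyint_def)
     apply simp
    apply (rule trans_Ico')
    using wid_pos[of m] by auto
  also have "emeasure lborel (dyint (pint R)) = ennreal (dlen (pint R))"
    by (simp add: dyint_Ico less_imp_le[OF dlen_pos])
  finally show ?thesis by (simp add: ennreal_mult less_imp_le[OF dlen_pos] less_imp_le[OF wid_pos])
qed

lemma five_emeasure: "emeasure lborel (five m R) = ennreal (25 * (dlen (pint R) * wid m))"
proof -
  have "emeasure lborel (five m R) = emeasure lborel {dcen (pint R) - 5/2 * dlen (pint R) .. dcen (pint R) + 5/2 * dlen (pint R)} * ennreal (5 * wid m)"
    unfolding five_PS
    apply (rule PS_emeasure)
      apply simp
     apply simp
    apply (rule trans_Icc')
    using wid_pos[of m] by auto
  also have "emeasure lborel {dcen (pint R) - 5/2 * dlen (pint R) .. dcen (pint R) + 5/2 * dlen (pint R)} = ennreal (5 * dlen (pint R))"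
    using less_imp_le[OF dlen_pos, of "pint R"] by simp
  finally show ?thesis by (simp add: ennreal_mult[symmetric] less_imp_le[OF dlen_pos] less_imp_le[OF wid_pos])
qed

lemma pset_sets: "pset m R \<in> sets lborel"
  unfolding pset_PS by (rule PS_sets') (auto simp: dyint_def)

lemma five_sets: "five m R \<in> sets lborel"
  unfolding five_PS by (rule PS_sets') auto

lemma five_fmeas: "five m R \<in> fmeasurable lborel"
  by (rule fmeasurableI[OF five_sets]) (simp add: five_emeasure)

lemma pset_measure: "measure lborel (pset m R) = dlen (pint R) * wid m"
  unfolding measure_def pset_emeasure by (simp add: less_imp_le[OF dlen_pos] less_imp_le[OF wid_pos])

lemma five_measure: "measure lborel (five m R) = 25 * measure lborel (pset m R)"
  unfolding pset_measure unfolding measure_def five_emeasure by (simp add: less_imp_le[OF dlen_pos] less_imp_le[OF wid_pos])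


definition Inv :: "real \<Rightarrow> nat \<Rightarrow> (real \<Rightarrow> dyad) \<Rightarrow> para set \<Rightarrow> para set \<times> para set \<times> para set \<Rightarrow> bool" where
  "Inv \<delta> m u Rt st \<longleftrightarrow> (let T = fst st; A = fst (snd st); B = snd (snd st) in
     T \<union> A \<union> B = Rt \<and> T \<inter> A = {} \<and> T \<inter> B = {} \<and> A \<inter> B = {} \<and>
     (\<forall>R\<in>B. pset m R \<subseteq> (\<Union>Q\<in>A. five m Q)) \<and>
     (\<forall>Q\<in>A. \<forall>R\<in>T. pL R \<le> pL Q \<and> \<not> pset m R \<subseteq> five m Q) \<and>
     (\<forall>R\<in>A. \<forall>R'\<in>A. R \<noteq> R' \<and> pset m R \<inter> pset m R' \<noteq> {} \<and> pL R \<le> pL R' \<longrightarrow>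
             \<not> (dyint (pslope R') \<subseteq> dyint (pslope R))))"

lemma Inv_step:
  assumes Rc: "Rt \<subseteq> Rcal \<delta> m u" and st: "sel_step m (T, A, B) st'" and I: "Inv \<delta> m u Rt (T, A, B)"
  shows "Inv \<delta> m u Rt st'"
proof -
  obtain R where RT: "R \<in> T" and mx: "\<forall>R'\<in>T. pL R' \<le> pL R"
    and st'eq: "st' = (T - {R} - {R' \<in> T - {R}. pset m R' \<subseteq> (\<Union>R''\<in>insert R A. five m R'')},
                 insert R A, B \<union> {R' \<in> T - {R}. pset m R' \<subseteq> (\<Union>R''\<in>insert R A. five m R'')})"
    using st unfolding sel_step_def Let_def by auto
  define mv where "mv = {R' \<in> T - {R}. pset m R' \<subseteq> (\<Union>R''\<in>insert R A. five m R'')}"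
  have I1: "T \<union> A \<union> B = Rt" "T \<inter> A = {}" "T \<inter> B = {}" "A \<inter> B = {}"
    and I2: "\<forall>R\<in>B. pset m R \<subseteq> (\<Union>Q\<in>A. five m Q)"
    and I3: "\<forall>Q\<in>A. \<forall>R\<in>T. pL R \<le> pL Q \<and> \<not> pset m R \<subseteq> five m Q"
    and I4: "\<forall>R\<in>A. \<forall>R'\<in>A. R \<noteq> R' \<and> pset m R \<inter> pset m R' \<noteq> {} \<and> pL R \<le> pL R' \<longrightarrow>
             \<not> (dyint (pslope R') \<subseteq> dyint (pslope R))"
    using I unfolding Inv_def Let_def by auto
  have RRc: "R \<in> Rcal \<delta> m u" using RT I1(1) Rc by auto
  have ARc: "\<And>Q. Q \<in> A \<Longrightarrow> Q \<in> Rcal \<delta> m u" using I1(1) Rc by auto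
  have n1: "(T - {R} - mv) \<union> insert R A \<union> (B \<union> mv) = Rt" using I1 RT unfolding mv_def by auto
  have n2: "(T - {R} - mv) \<inter> insert R A = {}" "(T - {R} - mv) \<inter> (B \<union> mv) = {}"
     "insert R A \<inter> (B \<union> mv) = {}"
    using I1 RT unfolding mv_def by auto
  have n3: "\<forall>R'\<in>B \<union> mv. pset m R' \<subseteq> (\<Union>Q\<in>insert R A. five m Q)"
    using I2 unfolding mv_def by blast
  have n4: "\<forall>Q\<in>insert R A. \<forall>R'\<in>T - {R} - mv. pL R' \<le> pL Q \<and> \<not> pset m R' \<subseteq> five m Q"
  proof (intro ballI)
    fix Q R' assume Q: "Q \<in> insert R A" and R': "R' \<in> T - {R} - mv"
    have "pL R' \<le> pL Q" using Q R' mx I3 by auto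
    moreover have "\<not> pset m R' \<subseteq> five m Q" using Q R' unfolding mv_def by blast
    ultimately show "pL R' \<le> pL Q \<and> \<not> pset m R' \<subseteq> five m Q" by blast
  qed
  have n5: "\<forall>P\<in>insert R A. \<forall>P'\<in>insert R A. P \<noteq> P' \<and> pset m P \<inter> pset m P' \<noteq> {} \<and> pL P \<le> pL P' \<longrightarrow>
             \<not> (dyint (pslope P') \<subseteq> dyint (pslope P))"
  proof (intro ballI impI)
    fix P P' assume P: "P \<in> insert R A" and P': "P' \<in> insert R A"
      and h: "P \<noteq> P' \<and> pset m P \<inter> pset m P' \<noteq> {} \<and> pL P \<le> pL P'"
    show "\<not> (dyint (pslope P') \<subseteq> dyint (pslope P))"
    proof (cases "P = R")
      case True
      then have P'A: "P' \<in> A" using P' h by auto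
      have c: "pL R \<le> pL P'" "\<not> pset m R \<subseteq> five m P'" using I3 P'A RT by auto
      show ?thesis
      proof
        assume sub: "dyint (pslope P') \<subseteq> dyint (pslope P)"
        have "pset m R \<subseteq> five m P'"
          by (rule keyK[OF RRc ARc[OF P'A]]) (use h True c sub in auto)
        with c show False by blast
      qed
    next
      case False
      then have PA: "P \<in> A" using P by auto
      show ?thesis
      proof (cases "P' = R")
        case True
        have c: "pL R \<le> pL P" "\<not> pset m R \<subseteq> five m P" using I3 PA RT by auto
        show ?thesis
        proof
          assume sub: "dyint (pslope P') \<subseteq> dyint (pslope P)"
          have "pset m R \<subseteq> five m P"
            by (rule keyK[OF RRc ARc[OF PA]]) (use h True c sub in auto)
          with c show False by blast
        qed
      next
        case False
        then have "P' \<in> A" using P' by auto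
        then show ?thesis using I4 PA h by blast
      qed
    qed
  qed
  show ?thesis
    unfolding st'eq mv_def[symmetric] Inv_def Let_def fst_conv snd_conv
    using n1 n2 n3 n4 n5 by blast
qed

lemma Inv_run:
  assumes "(sel_step m)\<^sup>*\<^sup>* s s'" "Rt \<subseteq> Rcal \<delta> m u" "Inv \<delta> m u Rt s"
  shows "Inv \<delta> m u Rt s'"
  using assms(1,3)
proof (induction rule: rtranclp_induct)
  case base then show ?case .
next
  case (step y z)
  obtain T A B where y: "y = (T, A, B)" by (cases y) auto
  show ?case using Inv_step[OF assms(2), of T A B z] step y by auto
qed

theorem mainTheorem4:
  fixes \<delta> :: real and m :: nat and u :: "real \<Rightarrow> dyad"
    and Rt R1 R2 :: "para set"
  assumes "0 < \<delta>" and "\<delta> \<le> 1" and "m \<ge> 1"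
    and "\<forall>x\<in>{0..<1}. u x \<in> Sk m"
    and "\<forall>s. {x \<in> {0..<1}. u x = s} \<in> sets lebesgue"
    and "finite Rt" and "Rt \<subseteq> Rcal \<delta> m u"
    and "selection m Rt R1 R2"
  shows "(R1 \<union> R2 = Rt \<and> R1 \<inter> R2 = {} \<and>
          measure lborel (\<Union>R\<in>R2. pset m R) \<le> 25 * (\<Sum>R\<in>R1. measure lborel (pset m R)))
       \<and> (\<forall>R\<in>R1. \<forall>R'\<in>R1. R \<noteq> R' \<and> pset m R \<inter> pset m R' \<noteq> {} \<and> pL R \<le> pL R' \<longrightarrow>
             \<not> (dyint (pslope R') \<subseteq> dyint (pslope R)))"
proof -
  have I0: "Inv \<delta> m u Rt (Rt, {}, {})" unfolding Inv_def Let_def by auto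
  have I: "Inv \<delta> m u Rt ({}, R1, R2)"
    using Inv_run[OF assms(8)[unfolded selection_def] assms(7) I0] .
  have J1: "R1 \<union> R2 = Rt" "R1 \<inter> R2 = {}"
    and J2: "\<forall>R\<in>R2. pset m R \<subseteq> (\<Union>Q\<in>R1. five m Q)"
    and J4: "\<forall>R\<in>R1. \<forall>R'\<in>R1. R \<noteq> R' \<and> pset m R \<inter> pset m R' \<noteq> {} \<and> pL R \<le> pL R' \<longrightarrow>
             \<not> (dyint (pslope R') \<subseteq> dyint (pslope R))"
    using I unfolding Inv_def Let_def by auto
  have f1: "finite R1" "finite R2" using J1 assms(6) by auto
  have "measure lborel (\<Union>R\<in>R2. pset m R) \<le> measure lborel (\<Union>Q\<in>R1. five m Q)"
  proof (rule measure_mono_fmeasurable)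
    show "(\<Union>R\<in>R2. pset m R) \<subseteq> (\<Union>Q\<in>R1. five m Q)" using J2 by blast
    show "(\<Union>R\<in>R2. pset m R) \<in> sets lborel" using f1(2) pset_sets by auto
    show "(\<Union>Q\<in>R1. five m Q) \<in> fmeasurable lborel"
      using f1(1) five_fmeas by (intro fmeasurable.finite_UN) auto
  qed
  also have "\<dots> \<le> (\<Sum>Q\<in>R1. measure lborel (five m Q))"
    by (rule measure_UNION_le[OF f1(1)]) (rule five_sets)
  also have "\<dots> = 25 * (\<Sum>R\<in>R1. measure lborel (pset m R))"
    by (simp add: five_measure sum_distrib_left)
  finally show ?thesis using J1 J4 by blast
qed

end
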